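(* Let $\alpha$ be any smooth section over $\mathcal D_e^-$ of $\mathrm{End}^1(E)$ with $[\alpha,\delta]=\alpha\delta+\delta\alpha=1$ ($\alpha$ need not square to zero). Then the 1-form $\kappa=\mathrm{Tr_s}[\alpha\,\mathbf d\delta]$ on $\mathcal D_e^-$ does not depend on the choice of $\alpha$, and it is closed. Moreover, for every smooth section $f$ of $T^*\mathcal D_e^-\widehat\otimes\mathrm{End}^0(E)$, $$\mathrm{Tr_s}\big[\alpha[f,\delta]\big]=\mathrm{Tr_s}[f] .$$
   Context: $E=\bigoplus_{i=p}^qE^i$ is a finite-dimensional complex $\mathbb Z$-graded vector space. $\mathrm{End}(E)$ is graded by degree and $\mathbb Z_2$-graded by parity, and $[A,B]=AB-(-1)^{\deg A\deg B}BA$ is the supercommutator. $\mathcal D_e^-$ is the (nonempty) manifold of exact differentials $\delta\in\mathrm{End}^{-1}(E)$ with $\delta^2=0$. $\mathbf d$ is the de Rham operator on $\mathcal D_e^-$, and $\delta$ is the tautological function. Products are in $\Lambda(T^*\mathcal D_e^-)\widehat\otimes\mathrm{End}(E)$ (graded tensor product, 1-forms odd). $\mathrm{Tr_s}[A]=\mathrm{Tr}[(-1)^NA]$, where $N$ is the number operator ($N=i$ on $E^i$), extended to $\Lambda(T^*\mathcal D_e^-)$-valued endomorphisms by $\mathrm{Tr_s}[\beta A]=\beta\,\mathrm{Tr_s}[A]$. *)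

theory Defs
  imports "HOL-Analysis.Analysis"
begin

text \<open>Model: E = complex^'n with a homogeneous basis; the basis vector e_i lies in E^(N i).
  End(E) = complex^'n^'n, viewed as a real Euclidean space (ambient space of the
  manifold of exact differentials).\<close>

type_synonym 'n endo = "complex^'n^'n"

definition hom_deg :: "('n::finite \<Rightarrow> int) \<Rightarrow> int \<Rightarrow> 'n endo \<Rightarrow> bool" where
  "hom_deg N k A = (\<forall>i j. A $ i $ j \<noteq> 0 \<longrightarrow> N i = N j + k)"

definition str :: "('n::finite \<Rightarrow> int) \<Rightarrow> 'n endo \<Rightarrow> complex" where
  "str N A = (\<Sum>i\<in>UNIV. (if even (N i) then 1 else -1) * A $ i $ i)"

definition exact_diffs :: "('n::finite \<Rightarrow> int) \<Rightarrow> 'n endo set" where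
  "exact_diffs N = {\<delta>. hom_deg N (-1) \<delta> \<and> \<delta> ** \<delta> = 0 \<and>
                        {x. \<delta> *v x = 0} = range (\<lambda>x. \<delta> *v x)}"

fun Ck :: "nat \<Rightarrow> 'a::euclidean_space set \<Rightarrow> ('a \<Rightarrow> 'b::real_normed_vector) \<Rightarrow> bool" where
  "Ck 0 U f = continuous_on U f"
| "Ck (Suc k) U f = (f differentiable_on U \<and> (\<forall>v. Ck k U (\<lambda>x. frechet_derivative f (at x) v)))"

definition Cinf_on :: "'a::euclidean_space set \<Rightarrow> ('a \<Rightarrow> 'b::real_normed_vector) \<Rightarrow> bool" where
  "Cinf_on U f = (open U \<and> (\<forall>k. Ck k U f))"

definition Cinf_on_set :: "'a::euclidean_space set \<Rightarrow> ('a \<Rightarrow> 'b::real_normed_vector) \<Rightarrow> bool" where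
  "Cinf_on_set S g = (\<forall>x\<in>S. \<exists>U h. open U \<and> x \<in> U \<and> Cinf_on U h \<and> (\<forall>y\<in>U \<inter> S. h y = g y))"

definition tangent_space :: "'a::euclidean_space set \<Rightarrow> 'a \<Rightarrow> 'a set" where
  "tangent_space S p = {v. \<exists>\<gamma>::real \<Rightarrow> 'a. Cinf_on UNIV \<gamma> \<and> (\<forall>t. \<gamma> t \<in> S) \<and> \<gamma> 0 = p \<and>
                          (\<gamma> has_derivative (\<lambda>t. t *\<^sub>R v)) (at 0)}"

text \<open>A (complex-valued) 1-form \<kappa> on S, given as \<kappa> p v for v tangent at p, is closed
  iff its pullback along every smooth map from an open subset of R^2 into S is closed,
  i.e. d(a dx + b dy) = (d_x b - d_y a) dx dy = 0.\<close>
definition closed_1form :: "'a::euclidean_space set \<Rightarrow> ('a \<Rightarrow> 'a \<Rightarrow> 'c::real_normed_vector) \<Rightarrow> bool" where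
  "closed_1form S \<kappa> = (\<forall>(U::(real\<times>real) set) \<phi>. open U \<and> Cinf_on U \<phi> \<and> \<phi> ` U \<subseteq> S \<longrightarrow>
      (\<forall>x\<in>U. \<exists>A B.
         ((\<lambda>y. \<kappa> (\<phi> y) (frechet_derivative \<phi> (at y) (1,0))) has_derivative A) (at x) \<and>
         ((\<lambda>y. \<kappa> (\<phi> y) (frechet_derivative \<phi> (at y) (0,1))) has_derivative B) (at x) \<and>
         B (1,0) = A (0,1)))"

text \<open>Graded products in Lambda(T^*) (x) End(E) for End-valued 1-forms F (F v = value on the
  tangent vector v) and 0-forms X of parity p, with the Koszul sign
  (1 (x) X)(beta (x) A) = (-1)^(p*1) beta (x) XA,  (beta (x) A)(1 (x) X) = beta (x) AX.\<close>
definition lmul0 :: "nat \<Rightarrow> 'n::finite endo \<Rightarrow> ('v \<Rightarrow> 'n endo) \<Rightarrow> ('v \<Rightarrow> 'n endo)" where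
  "lmul0 p X F = (\<lambda>v. ((-1::real) ^ p) *\<^sub>R (X ** F v))"

definition rmul0 :: "('v \<Rightarrow> 'n::finite endo) \<Rightarrow> 'n endo \<Rightarrow> ('v \<Rightarrow> 'n endo)" where
  "rmul0 F X = (\<lambda>v. F v ** X)"

text \<open>Supercommutator [F,X] = F X - (-1)^(|F||X|) X F, where the End-valued 1-form F has
  values of parity pF (total parity 1+pF) and X has parity pX.\<close>
definition scomm10 :: "nat \<Rightarrow> nat \<Rightarrow> ('v \<Rightarrow> 'n::finite endo) \<Rightarrow> 'n endo \<Rightarrow> ('v \<Rightarrow> 'n endo)" where
  "scomm10 pF pX F X = (\<lambda>v. rmul0 F X v - ((-1::real) ^ ((1 + pF) * pX)) *\<^sub>R lmul0 pX X F v)"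

definition str_form :: "('n::finite \<Rightarrow> int) \<Rightarrow> ('v \<Rightarrow> 'n endo) \<Rightarrow> ('v \<Rightarrow> complex)" where
  "str_form N F = (\<lambda>v. str N (F v))"

text \<open>d delta: de Rham differential of the tautological function, d delta (v) = v.\<close>
definition d_taut :: "'n::finite endo \<Rightarrow> 'n endo \<Rightarrow> 'n endo" where
  "d_taut \<delta> = (\<lambda>v. v)"

definition kappa :: "('n::finite \<Rightarrow> int) \<Rightarrow> ('n endo \<Rightarrow> 'n endo) \<Rightarrow> 'n endo \<Rightarrow> 'n endo \<Rightarrow> complex" where
  "kappa N \<alpha> = (\<lambda>\<delta>. str_form N (lmul0 1 (\<alpha> \<delta>) (d_taut \<delta>)))"

definition homotopy_section :: "('n::finite \<Rightarrow> int) \<Rightarrow> ('n endo \<Rightarrow> 'n endo) \<Rightarrow> bool" where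
  "homotopy_section N \<alpha> = (Cinf_on_set (exact_diffs N) \<alpha> \<and>
     (\<forall>\<delta>\<in>exact_diffs N. hom_deg N 1 (\<alpha> \<delta>) \<and> \<alpha> \<delta> ** \<delta> + \<delta> ** \<alpha> \<delta> = mat 1))"

text \<open>Smooth sections of T^*D (x) End^0(E), represented by a smooth function f(delta,v),
  real-linear in v, with values in End^0(E).\<close>
definition form_section0 :: "('n::finite \<Rightarrow> int) \<Rightarrow> ('n endo \<Rightarrow> 'n endo \<Rightarrow> 'n endo) \<Rightarrow> bool" where
  "form_section0 N f = (Cinf_on_set (exact_diffs N \<times> UNIV) (\<lambda>(\<delta>, v). f \<delta> v) \<and>
     (\<forall>\<delta>\<in>exact_diffs N. linear (f \<delta>) \<and> (\<forall>v. hom_deg N 0 (f \<delta> v))))"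

end

theory Submission
  imports Defs
begin


definition sgnN :: "('n::finite \<Rightarrow> int) \<Rightarrow> 'n \<Rightarrow> complex" where
  "sgnN N i = (if even (N i) then 1 else -1)"

lemma str_alt: "str N A = (\<Sum>i\<in>UNIV. sgnN N i * A $ i $ i)"
  by (simp add: str_def sgnN_def)

lemma str_add: "str N (A + B) = str N A + str N B"
  by (simp add: str_def sum.distrib algebra_simps)
lemma str_diff: "str N (A - B) = str N A - str N B"
  by (simp add: str_def sum_subtractf algebra_simps)
lemma str_neg: "str N (- A) = - str N A"
  by (simp add: str_def sum_negf algebra_simps)

lemma str_swap:
  assumes "hom_deg N k X"
  shows "str N (X ** Y) = (if even k then 1 else -1) * str N (Y ** X)"
proof -
  have tm: "sgnN N i * (X$i$j * Y$j$i) = (if even k then 1 else -1) * (sgnN N j * (Y$j$i * X$i$j))" for i j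
  proof (cases "X$i$j = 0")
    case True then show ?thesis by simp
  next
    case False
    then have "N i = N j + k" using assms unfolding hom_deg_def by blast
    then show ?thesis by (auto simp: sgnN_def)
  qed
  have "str N (X ** Y) = (\<Sum>i\<in>UNIV. \<Sum>j\<in>UNIV. sgnN N i * (X$i$j * Y$j$i))"
    by (simp add: str_alt matrix_matrix_mult_def sum_distrib_left)
  also have "\<dots> = (\<Sum>i\<in>UNIV. \<Sum>j\<in>UNIV. (if even k then 1 else -1) * (sgnN N j * (Y$j$i * X$i$j)))"
    by (intro sum.cong refl tm)
  also have "\<dots> = (\<Sum>j\<in>UNIV. \<Sum>i\<in>UNIV. (if even k then 1 else -1) * (sgnN N j * (Y$j$i * X$i$j)))"
    by (rule sum.swap)
  also have "\<dots> = (if even k then 1 else -1) * str N (Y ** X)"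
    by (simp add: str_alt matrix_matrix_mult_def sum_distrib_left)
  finally show ?thesis .
qed

lemma str_swap_odd: "hom_deg N k X \<Longrightarrow> odd k \<Longrightarrow> str N (X ** Y) = - str N (Y ** X)"
  using str_swap by fastforce
lemma str_swap_even: "hom_deg N k X \<Longrightarrow> even k \<Longrightarrow> str N (X ** Y) = str N (Y ** X)"
  using str_swap by fastforce

lemma hom_deg_mult:
  assumes "hom_deg N k A" "hom_deg N l B"
  shows "hom_deg N (k + l) (A ** B)"
  unfolding hom_deg_def
proof (intro allI impI)
  fix i j assume "(A ** B) $ i $ j \<noteq> 0"
  then obtain m where "A$i$m * B$m$j \<noteq> 0"
    unfolding matrix_matrix_mult_def by (metis (no_types, lifting) sum.neutral vec_lambda_beta)
  then show "N i = N j + (k + l)" using assms unfolding hom_deg_def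
    by (metis add.assoc add.commute mult_not_zero)
qed


lemma mm_radd: "(A + B) ** C = A ** C + B ** (C::'a::semiring_1^_^_)"
  by (simp add: matrix_matrix_mult_def vec_eq_iff sum.distrib algebra_simps)
lemma mm_ldiff: "A ** (B - C) = A ** B - A ** (C::'a::ring_1^_^_)"
  by (simp add: matrix_matrix_mult_def vec_eq_iff sum_subtractf algebra_simps)
lemma mm_rdiff: "(A - B) ** C = A ** C - B ** (C::'a::ring_1^_^_)"
  by (simp add: matrix_matrix_mult_def vec_eq_iff sum_subtractf algebra_simps)
lemma mm_lneg: "(- A) ** B = - (A ** (B::'a::ring_1^_^_))"
  by (simp add: matrix_matrix_mult_def vec_eq_iff sum_negf)
lemma mm_rneg: "A ** (- B) = - (A ** (B::'a::ring_1^_^_))"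
  by (simp add: matrix_matrix_mult_def vec_eq_iff sum_negf)

lemmas mm_simps = matrix_mul_assoc[symmetric] matrix_add_ldistrib mm_radd mm_ldiff mm_rdiff mm_lneg mm_rneg

lemma anti_eq: "(X ** d + d ** X = (0::'a::ring_1^_^_)) \<Longrightarrow> d ** X = - (X ** d)"
  by (simp add: add.commute add_eq_0_iff)

lemma L0:
  fixes a d C Y :: "'n::finite endo"
  assumes ad: "a ** d + d ** a = mat 1" and hd: "hom_deg N k d" "odd k"
    and C: "C ** d + d ** C = 0" and Y: "Y ** d + d ** Y = 0"
  shows "str N (C ** Y) = 0"
proof -
  have dC: "d ** C = - (C ** d)" using anti_eq[OF C] .
  have dY: "Y ** d = - (d ** Y)" using Y by (simp add: add_eq_0_iff)
  have "C ** Y = (a ** d + d ** a) ** (C ** Y)" using ad by simp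
  also have "\<dots> = a ** ((d ** C) ** Y) + d ** (a ** C ** Y)" by (simp add: mm_simps)
  also have "\<dots> = - (a ** C ** d ** Y) + d ** (a ** C ** Y)" by (simp add: dC mm_simps)
  finally have 1: "C ** Y = - (a ** C ** d ** Y) + d ** (a ** C ** Y)" .
  have "str N (d ** (a ** C ** Y)) = - str N ((a ** C ** Y) ** d)"
    using str_swap_odd[OF hd] .
  also have "(a ** C ** Y) ** d = - (a ** C ** d ** Y)" by (simp add: mm_simps dY)
  finally have 2: "str N (d ** (a ** C ** Y)) = str N (a ** C ** d ** Y)" by (simp add: str_neg)
  show ?thesis using 1 2 by (simp add: str_add str_neg str_diff)
qed

lemma L3:
  fixes a d F :: "'n::finite endo"
  assumes ad: "a ** d + d ** a = mat 1" and hd: "hom_deg N k d" "odd k"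
  shows "str N (a ** (d ** F)) - str N (a ** (F ** d)) = str N F"
proof -
  have "a ** (d ** F) = (a ** d + d ** a) ** F - d ** (a ** F)" by (simp add: mm_simps)
  then have 1: "a ** (d ** F) = F - d ** (a ** F)" using ad by simp
  have 2: "str N (d ** (a ** F)) = - str N (a ** F ** d)"
    using str_swap_odd[OF hd] by simp
  show ?thesis using 1 2 by (simp add: str_diff matrix_mul_assoc[symmetric])
qed

lemma ident:
  fixes a d X :: "'n::finite endo"
  assumes ad: "a ** d + d ** a = mat 1" and X: "X ** d + d ** X = 0"
  shows "a ** X + X ** a = a ** X ** a ** d + d ** a ** X ** a"
proof -
  have dX: "X ** d = - (d ** X)" using X by (simp add: add_eq_0_iff)
  have "a ** X = a ** X ** (a ** d + d ** a)" using ad by simp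
  also have "\<dots> = a ** X ** a ** d + a ** (X ** d) ** a" by (simp add: mm_simps)
  also have "\<dots> = a ** X ** a ** d - a ** d ** X ** a" by (simp add: mm_simps dX)
  finally have 1: "a ** X = a ** X ** a ** d - a ** d ** X ** a" .
  have "X ** a = (a ** d + d ** a) ** X ** a" using ad by simp
  also have "\<dots> = a ** d ** X ** a + d ** a ** X ** a" by (simp add: mm_simps)
  finally have 2: "X ** a = a ** d ** X ** a + d ** a ** X ** a" .
  show ?thesis using 1 2 by (simp add: algebra_simps)
qed

lemma half2:
  fixes a d X Y A :: "'n::finite endo"
  assumes ad: "a ** d + d ** a = mat 1" and hd: "hom_deg N (-1) d"
    and X: "X ** d + d ** X = 0" and Y: "Y ** d + d ** Y = 0"
    and A: "A ** d + a ** X + X ** a + d ** A = 0"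
  shows "str N (A ** Y) = - str N (a ** X ** a ** Y)"
proof -
  have "(A + a ** X ** a) ** d + d ** (A + a ** X ** a)
      = (A ** d + d ** A) + (a ** X ** a ** d + d ** a ** X ** a)"
    by (simp add: mm_simps algebra_simps)
  also have "\<dots> = (A ** d + d ** A) + (a ** X + X ** a)" using ident[OF ad X] by simp
  also have "\<dots> = 0" using A by (simp add: algebra_simps)
  finally have "str N ((A + a ** X ** a) ** Y) = 0"
    using L0[OF ad hd _ _ Y] by simp
  then show ?thesis by (simp add: mm_radd str_add eq_neg_iff_add_eq_0)
qed

lemma L2:
  fixes a d X Y A B :: "'n::finite endo"
  assumes ad: "a ** d + d ** a = mat 1" and hd: "hom_deg N (-1) d" and ha: "hom_deg N 1 a"
    and hX: "hom_deg N (-1) X"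
    and X: "X ** d + d ** X = 0" and Y: "Y ** d + d ** Y = 0"
    and A: "A ** d + a ** X + X ** a + d ** A = 0"
    and B: "B ** d + a ** Y + Y ** a + d ** B = 0"
  shows "str N (A ** Y) = str N (B ** X)"
proof -
  have h0: "hom_deg N 0 (a ** X)" using hom_deg_mult[OF ha hX] by simp
  have "str N ((a ** X) ** (a ** Y)) = str N ((a ** Y) ** (a ** X))"
    by (rule str_swap_even[OF h0]) simp
  then show ?thesis using half2[OF ad hd X Y A] half2[OF ad hd Y X B]
    by (simp add: matrix_mul_assoc)
qed


lemma onesided:
  fixes \<phi> :: "'a::real_normed_vector \<Rightarrow> 'b::real_normed_vector"
  assumes U: "open U" "x \<in> U"
    and D: "\<And>y. y \<in> U \<Longrightarrow> (\<phi> has_derivative D y) (at y)"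
    and Lu: "((\<lambda>y. D y u) has_derivative Lu) (at x)"
    and e: "e > 0"
  shows "\<exists>s0>0. \<forall>s. 0 < s \<and> s < s0 \<longrightarrow>
     norm (\<phi> (x + s *\<^sub>R u + s *\<^sub>R w) - \<phi> (x + s *\<^sub>R u) - \<phi> (x + s *\<^sub>R w) + \<phi> x
           - (s * s) *\<^sub>R Lu w) \<le> e * s * s"
proof -
  define K where "K = 2 * norm u + norm w + 1"
  have K: "K > 0" unfolding K_def by (simp add: add_nonneg_pos)
  define e' where "e' = e / K"
  have e': "e' > 0" using e K by (simp add: e'_def)
  have bl: "bounded_linear Lu" using Lu by (rule has_derivative_bounded_linear)
  then have linLu: "linear Lu" by (rule bounded_linear.linear)
  from Lu e' obtain d where d: "d > 0"
    and dd: "\<And>y. norm (y - x) < d \<Longrightarrow> norm (D y u - D x u - Lu (y - x)) \<le> e' * norm (y - x)"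
    unfolding has_derivative_at_alt by blast
  from U obtain r where r: "r > 0" "ball x r \<subseteq> U" by (meson openE)
  define s0 where "s0 = min d r / K"
  have s0: "s0 > 0" using d r K by (simp add: s0_def)
  show ?thesis
  proof (intro exI[of _ s0] conjI allI impI s0)
    fix s :: real assume s: "0 < s \<and> s < s0"
    have sK: "s * K < min d r" using s K by (simp add: s0_def pos_less_divide_eq)
    have small: "norm (t *\<^sub>R u + s *\<^sub>R w) < min d r" "norm (t *\<^sub>R u) < min d r"
      if "t \<in> {0..s}" for t
    proof -
      have "norm (t *\<^sub>R u + s *\<^sub>R w) \<le> t * norm u + s * norm w"
        using that s by (metis (no_types, lifting) abs_of_nonneg atLeastAtMost_iff norm_scaleR norm_triangle_le order.refl less_imp_le)
      also have "\<dots> \<le> s * norm u + s * norm w" using that by (simp add: mult_right_mono)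
      also have "\<dots> < s * K"
      proof -
        have "0 \<le> s * norm u" "0 \<le> s * norm w" using s by simp_all
        then show ?thesis using s by (simp add: K_def distrib_left add_pos_nonneg add_nonneg_pos)
      qed
      finally show "norm (t *\<^sub>R u + s *\<^sub>R w) < min d r" using sK by linarith
      have "norm (t *\<^sub>R u) \<le> s * norm u" using that by (simp add: mult_right_mono)
      also have "\<dots> < s * K"
      proof -
        have "0 \<le> s * norm u" "0 \<le> s * norm w" using s by simp_all
        then show ?thesis using s by (simp add: K_def distrib_left add_pos_nonneg add_nonneg_pos)
      qed
      finally show "norm (t *\<^sub>R u) < min d r" using sK by linarith
    qed
    have inU0: "x + z \<in> U" if "norm z < r" for z
    proof -
      have "x + z \<in> ball x r" using that by (simp add: dist_norm)
      then show ?thesis using r(2) by blast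
    qed
    have inU: "x + t *\<^sub>R u + s *\<^sub>R w \<in> U" "x + t *\<^sub>R u \<in> U" if "t \<in> {0..s}" for t
      using small[OF that] inU0[of "t *\<^sub>R u + s *\<^sub>R w"] inU0[of "t *\<^sub>R u"] by (auto simp: add.assoc)
    define H where "H t = \<phi> (x + t *\<^sub>R u + s *\<^sub>R w) - \<phi> (x + t *\<^sub>R u) - t *\<^sub>R (s *\<^sub>R Lu w)" for t
    define c where "c t = D (x + t *\<^sub>R u + s *\<^sub>R w) u - D (x + t *\<^sub>R u) u - s *\<^sub>R Lu w" for t
    have derH: "(H has_derivative (\<lambda>h. h *\<^sub>R c t)) (at t within {0..s})" if t: "t \<in> {0..s}" for t
    proof -
      have lin1: "linear (D (x + t *\<^sub>R u + s *\<^sub>R w))" using D[OF inU(1)[OF t]] by (rule has_derivative_linear)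
      have lin2: "linear (D (x + t *\<^sub>R u))" using D[OF inU(2)[OF t]] by (rule has_derivative_linear)
      have i1: "((\<lambda>t. x + t *\<^sub>R u + s *\<^sub>R w) has_derivative (\<lambda>h. h *\<^sub>R u)) (at t within {0..s})"
        by (auto intro!: derivative_eq_intros)
      have i2: "((\<lambda>t. x + t *\<^sub>R u) has_derivative (\<lambda>h. h *\<^sub>R u)) (at t within {0..s})"
        by (auto intro!: derivative_eq_intros)
      have c1: "((\<lambda>t. \<phi> (x + t *\<^sub>R u + s *\<^sub>R w)) has_derivative (\<lambda>h. D (x + t *\<^sub>R u + s *\<^sub>R w) (h *\<^sub>R u))) (at t within {0..s})"
        using has_derivative_compose[OF i1 D[OF inU(1)[OF t]]] .
      have c2: "((\<lambda>t. \<phi> (x + t *\<^sub>R u)) has_derivative (\<lambda>h. D (x + t *\<^sub>R u) (h *\<^sub>R u))) (at t within {0..s})"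
        using has_derivative_compose[OF i2 D[OF inU(2)[OF t]]] .
      have c3: "((\<lambda>t. t *\<^sub>R (s *\<^sub>R Lu w)) has_derivative (\<lambda>h. h *\<^sub>R (s *\<^sub>R Lu w))) (at t within {0..s})"
        by (auto intro!: derivative_eq_intros)
      have "(H has_derivative (\<lambda>h. D (x + t *\<^sub>R u + s *\<^sub>R w) (h *\<^sub>R u) - D (x + t *\<^sub>R u) (h *\<^sub>R u) - h *\<^sub>R (s *\<^sub>R Lu w))) (at t within {0..s})"
        unfolding H_def by (intro has_derivative_diff c1 c2 c3)
      moreover have "(\<lambda>h. D (x + t *\<^sub>R u + s *\<^sub>R w) (h *\<^sub>R u) - D (x + t *\<^sub>R u) (h *\<^sub>R u) - h *\<^sub>R (s *\<^sub>R Lu w)) = (\<lambda>h. h *\<^sub>R c t)"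
        using linear_scale[OF lin1] linear_scale[OF lin2] by (simp add: c_def fun_eq_iff scaleR_diff_right)
      ultimately show ?thesis by simp
    qed
    have bound: "onorm (\<lambda>h. h *\<^sub>R c t) \<le> e * s" if t: "t \<in> {0..s}" for t
    proof -
      have "onorm (\<lambda>h::real. h *\<^sub>R c t) = norm (c t)"
        using onorm_scaleR_left[OF bounded_linear_ident, of "c t"] by (simp add: onorm_id)
      also have eqc: "c t = (D (x + (t *\<^sub>R u + s *\<^sub>R w)) u - D x u - Lu ((x + (t *\<^sub>R u + s *\<^sub>R w)) - x))
                     - (D (x + t *\<^sub>R u) u - D x u - Lu ((x + t *\<^sub>R u) - x))"
        using linear_add[OF linLu, of "t *\<^sub>R u" "s *\<^sub>R w"] linear_scale[OF linLu, of s w]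
        by (simp add: c_def add.assoc algebra_simps)
      also have "norm \<dots> \<le> e' * norm (t *\<^sub>R u + s *\<^sub>R w) + e' * norm (t *\<^sub>R u)"
      proof -
        have h1: "norm (D (x + (t *\<^sub>R u + s *\<^sub>R w)) u - D x u - Lu ((x + (t *\<^sub>R u + s *\<^sub>R w)) - x))
            \<le> e' * norm (t *\<^sub>R u + s *\<^sub>R w)"
          using dd[of "x + (t *\<^sub>R u + s *\<^sub>R w)"] small[OF t] by simp
        have h2: "norm (D (x + t *\<^sub>R u) u - D x u - Lu ((x + t *\<^sub>R u) - x)) \<le> e' * norm (t *\<^sub>R u)"
          using dd[of "x + t *\<^sub>R u"] small[OF t] by simp
        show ?thesis by (rule order.trans[OF norm_triangle_ineq4 add_mono[OF h1 h2]])
      qed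
      also have "\<dots> \<le> e' * (s * K)"
      proof -
        have "norm (t *\<^sub>R u + s *\<^sub>R w) + norm (t *\<^sub>R u) \<le> (t * norm u + s * norm w) + t * norm u"
          using t s by (intro add_mono) (auto intro: order.trans[OF norm_triangle_ineq])
        also have "\<dots> \<le> s * K"
        proof -
          have "t * norm u \<le> s * norm u" using t by (simp add: mult_right_mono)
          then show ?thesis using s by (simp add: K_def algebra_simps)
        qed
        finally show ?thesis using e' by (simp add: distrib_left[symmetric])
      qed
      also have "\<dots> = e * s" using K by (simp add: e'_def)
      finally show ?thesis by (simp only: eqc)
    qed
    have "norm (H s - H 0) \<le> (e * s) * norm (s - 0)"
      by (rule differentiable_bound[OF convex_real_interval(5) derH bound]) (use s in auto)
    moreover have "H s - H 0 = \<phi> (x + s *\<^sub>R u + s *\<^sub>R w) - \<phi> (x + s *\<^sub>R u) - \<phi> (x + s *\<^sub>R w) + \<phi> x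
           - (s * s) *\<^sub>R Lu w"
      by (simp add: H_def algebra_simps)
    ultimately show "norm (\<phi> (x + s *\<^sub>R u + s *\<^sub>R w) - \<phi> (x + s *\<^sub>R u) - \<phi> (x + s *\<^sub>R w) + \<phi> x
           - (s * s) *\<^sub>R Lu w) \<le> e * s * s" using s by simp
  qed
qed

lemma schwarz:
  fixes \<phi> :: "'a::real_normed_vector \<Rightarrow> 'b::real_normed_vector"
  assumes U: "open U" "x \<in> U"
    and D: "\<And>y. y \<in> U \<Longrightarrow> (\<phi> has_derivative D y) (at y)"
    and Lu: "((\<lambda>y. D y u) has_derivative Lu) (at x)"
    and Lw: "((\<lambda>y. D y w) has_derivative Lw) (at x)"
  shows "Lu w = Lw u"
proof (rule ccontr)
  assume ne: "Lu w \<noteq> Lw u"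
  define e where "e = norm (Lu w - Lw u) / 4"
  have e: "e > 0" using ne by (simp add: e_def)
  obtain s1 where s1: "s1 > 0" and S1: "\<And>s. 0 < s \<Longrightarrow> s < s1 \<Longrightarrow>
     norm (\<phi> (x + s *\<^sub>R u + s *\<^sub>R w) - \<phi> (x + s *\<^sub>R u) - \<phi> (x + s *\<^sub>R w) + \<phi> x
           - (s * s) *\<^sub>R Lu w) \<le> e * s * s"
    using onesided[OF U D Lu e, of w] by blast
  obtain s2 where s2: "s2 > 0" and S2: "\<And>s. 0 < s \<Longrightarrow> s < s2 \<Longrightarrow>
     norm (\<phi> (x + s *\<^sub>R w + s *\<^sub>R u) - \<phi> (x + s *\<^sub>R w) - \<phi> (x + s *\<^sub>R u) + \<phi> x
           - (s * s) *\<^sub>R Lw u) \<le> e * s * s"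
    using onesided[OF U D Lw e, of u] by blast
  define s where "s = min s1 s2 / 2"
  have s: "0 < s" "s < s1" "s < s2" using s1 s2 by (auto simp: s_def)
  define F where "F = \<phi> (x + s *\<^sub>R u + s *\<^sub>R w) - \<phi> (x + s *\<^sub>R u) - \<phi> (x + s *\<^sub>R w) + \<phi> x"
  have F2: "\<phi> (x + s *\<^sub>R w + s *\<^sub>R u) - \<phi> (x + s *\<^sub>R w) - \<phi> (x + s *\<^sub>R u) + \<phi> x = F"
  proof -
    have "x + s *\<^sub>R w + s *\<^sub>R u = x + s *\<^sub>R u + s *\<^sub>R w" by (simp add: add_ac)
    then show ?thesis unfolding F_def by (simp only:) (simp add: algebra_simps)
  qed
  have a1: "norm (F - (s * s) *\<^sub>R Lu w) \<le> e * s * s" using S1[OF s(1,2)] by (simp add: F_def)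
  have a2: "norm (F - (s * s) *\<^sub>R Lw u) \<le> e * s * s" using S2[OF s(1,3)] F2 by simp
  have "(s * s) *\<^sub>R (Lu w - Lw u) = (F - (s * s) *\<^sub>R Lw u) - (F - (s * s) *\<^sub>R Lu w)"
    by (simp add: algebra_simps)
  then have "norm ((s * s) *\<^sub>R (Lu w - Lw u)) \<le> e * s * s + e * s * s"
    using a1 a2 norm_triangle_ineq4[of "F - (s * s) *\<^sub>R Lw u" "F - (s * s) *\<^sub>R Lu w"] by simp
  moreover have "norm ((s * s) *\<^sub>R (Lu w - Lw u)) = (s * s) * norm (Lu w - Lw u)" using s by simp
  ultimately have "(s * s) * norm (Lu w - Lw u) \<le> (s * s) * (2 * e)" by (simp add: algebra_simps)
  then have "norm (Lu w - Lw u) \<le> 2 * e" using s by simp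
  then show False using e by (simp add: e_def)
qed


lemma str_scaleR: "str N (k *\<^sub>R A) = k *\<^sub>R str N A"
  unfolding str_def by (simp only: vector_scaleR_component scaleR_sum_right mult_scaleR_right)

lemma bl_str: "bounded_linear (str N :: 'n::finite endo \<Rightarrow> complex)"
  unfolding linear_conv_bounded_linear[symmetric]
  by (rule linearI) (simp_all add: str_add str_scaleR)

lemma bb_mm: "bounded_bilinear ((**) :: 'n::finite endo \<Rightarrow> 'n endo \<Rightarrow> 'n endo)"
  unfolding bilinear_conv_bounded_bilinear[symmetric] bilinear_def
  by (auto intro!: linearI simp: matrix_add_ldistrib mm_radd matrix_scalar_ac scalar_matrix_assoc)

lemma kappa_eq: "kappa N \<alpha> p w = - str N (\<alpha> p ** w)"
  by (simp add: kappa_def str_form_def lmul0_def d_taut_def str_neg)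

lemma scomm_eq: "str_form N (lmul0 1 A (scomm10 0 1 F d)) v = str N (A ** (d ** F v)) - str N (A ** (F v ** d))"
  by (simp add: str_form_def lmul0_def scomm10_def rmul0_def str_neg mm_ldiff str_diff)

lemma deriv_zero:
  assumes "open U" "x \<in> U" "\<And>y. y \<in> U \<Longrightarrow> f y = c" "(f has_derivative f') (at x)"
  shows "f' h = 0"
proof -
  have "((\<lambda>y. c) has_derivative f') (at x)"
    by (rule has_derivative_transform_within_open[OF assms(4) assms(1,2)]) (use assms(3) in simp)
  then have "f' = (\<lambda>_. 0)" using has_derivative_unique has_derivative_const by blast
  then show ?thesis by simp
qed

lemma deriv_nth:
  assumes "(f has_derivative f') F"
  shows "((\<lambda>y. f y $ i $ j) has_derivative (\<lambda>h. f' h $ i $ j)) F"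
  using bounded_linear.has_derivative[OF bounded_linear_vec_nth
        bounded_linear.has_derivative[OF bounded_linear_vec_nth assms]] .

lemma deriv_hom:
  fixes f :: "'a::real_normed_vector \<Rightarrow> 'n::finite endo"
  assumes "open U" "x \<in> U" "\<And>y. y \<in> U \<Longrightarrow> hom_deg N k (f y)" "(f has_derivative f') (at x)"
  shows "hom_deg N k (f' h)"
  unfolding hom_deg_def
proof (intro allI impI)
  fix i j assume ne: "f' h $ i $ j \<noteq> 0"
  show "N i = N j + k"
  proof (rule ccontr)
    assume "N i \<noteq> N j + k"
    then have "\<And>y. y \<in> U \<Longrightarrow> f y $ i $ j = 0" using assms(3) unfolding hom_deg_def by blast
    then have "f' h $ i $ j = 0" using deriv_zero[OF assms(1,2) _ deriv_nth[OF assms(4)]] by blast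
    then show False using ne by simp
  qed
qed

lemma tangent_anti:
  assumes "v \<in> tangent_space (exact_diffs N) \<delta>"
  shows "v ** \<delta> + \<delta> ** v = 0"
proof -
  obtain \<gamma> :: "real \<Rightarrow> 'a::finite endo" where g: "\<forall>t. \<gamma> t \<in> exact_diffs N" "\<gamma> 0 = \<delta>"
    "(\<gamma> has_derivative (\<lambda>t. t *\<^sub>R v)) (at 0)"
    using assms unfolding tangent_space_def by blast
  have "((\<lambda>t. \<gamma> t ** \<gamma> t) has_derivative (\<lambda>h. \<gamma> 0 ** (h *\<^sub>R v) + (h *\<^sub>R v) ** \<gamma> 0)) (at 0)"
    using bounded_bilinear.FDERIV[OF bb_mm g(3) g(3)] .
  moreover have "\<And>t. t \<in> UNIV \<Longrightarrow> \<gamma> t ** \<gamma> t = 0" using g(1) by (simp add: exact_diffs_def)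
  ultimately have "\<gamma> 0 ** (1 *\<^sub>R v) + (1 *\<^sub>R v) ** \<gamma> 0 = 0"
    using deriv_zero[of UNIV 0 "\<lambda>t. \<gamma> t ** \<gamma> t" 0] by blast
  then show ?thesis using g(2) by (simp add: add.commute)
qed


lemma part1:
  assumes "homotopy_section N \<alpha>" "homotopy_section N \<alpha>'" "\<delta> \<in> exact_diffs N"
    "v \<in> tangent_space (exact_diffs N) \<delta>"
  shows "kappa N \<alpha> \<delta> v = kappa N \<alpha>' \<delta> v"
proof -
  have ad: "\<alpha> \<delta> ** \<delta> + \<delta> ** \<alpha> \<delta> = mat 1" "\<alpha>' \<delta> ** \<delta> + \<delta> ** \<alpha>' \<delta> = mat 1"
    using assms unfolding homotopy_section_def by auto
  have hd: "hom_deg N (-1) \<delta>" using assms(3) by (simp add: exact_diffs_def)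
  have C: "(\<alpha> \<delta> - \<alpha>' \<delta>) ** \<delta> + \<delta> ** (\<alpha> \<delta> - \<alpha>' \<delta>) = 0"
    using ad by (simp add: mm_rdiff mm_ldiff algebra_simps)
  have "str N ((\<alpha> \<delta> - \<alpha>' \<delta>) ** v) = 0"
    by (rule L0[OF ad(1) hd _ C tangent_anti[OF assms(4)]]) simp
  then show ?thesis by (simp add: kappa_eq mm_rdiff str_diff)
qed

lemma part3:
  assumes "homotopy_section N \<alpha>" "\<delta> \<in> exact_diffs N"
  shows "str_form N (lmul0 1 (\<alpha> \<delta>) (scomm10 0 1 (f \<delta>) \<delta>)) v = str_form N (f \<delta>) v"
proof -
  have ad: "\<alpha> \<delta> ** \<delta> + \<delta> ** \<alpha> \<delta> = mat 1"
    using assms unfolding homotopy_section_def by auto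
  have hd: "hom_deg N (-1) \<delta>" using assms(2) by (simp add: exact_diffs_def)
  show ?thesis unfolding scomm_eq using L3[OF ad hd] by (simp add: str_form_def)
qed

lemma part2:
  assumes hs: "homotopy_section N \<alpha>"
  shows "closed_1form (exact_diffs N) (kappa N \<alpha>)"
  unfolding closed_1form_def
proof (intro allI impI ballI)
  fix U :: "(real \<times> real) set" and \<phi> x
  assume asm: "open U \<and> Cinf_on U \<phi> \<and> \<phi> ` U \<subseteq> exact_diffs N" and x: "x \<in> U"
  define S where "S = exact_diffs N"
  have U: "open U" and phiS: "\<And>y. y \<in> U \<Longrightarrow> \<phi> y \<in> S" using asm by (auto simp: S_def)
  have "Ck (Suc (Suc 0)) U \<phi>" using asm by (simp add: Cinf_on_def)
  then have dphi: "\<phi> differentiable_on U"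
    and dg: "\<And>v. (\<lambda>y. frechet_derivative \<phi> (at y) v) differentiable_on U" by auto
  define D where "D y = frechet_derivative \<phi> (at y)" for y
  have Dd: "(\<phi> has_derivative D y) (at y)" if "y \<in> U" for y
    using dphi that U unfolding D_def
    by (simp add: differentiable_on_eq_differentiable_at frechet_derivative_works[symmetric])
  define g1 where "g1 = (\<lambda>y. D y (1,0))"
  define g2 where "g2 = (\<lambda>y. D y (0,1))"
  define G1 where "G1 = frechet_derivative g1 (at x)"
  define G2 where "G2 = frechet_derivative g2 (at x)"
  have G1d: "(g1 has_derivative G1) (at x)"
    using dg[of "(1,0)"] x U unfolding G1_def g1_def D_def
    by (simp add: differentiable_on_eq_differentiable_at frechet_derivative_works[symmetric])
  have G2d: "(g2 has_derivative G2) (at x)"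
    using dg[of "(0,1)"] x U unfolding G2_def g2_def D_def
    by (simp add: differentiable_on_eq_differentiable_at frechet_derivative_works[symmetric])
  have sym: "G1 (0,1) = G2 (1,0)"
    by (rule schwarz[OF U x Dd]) (use G1d G2d in \<open>simp_all add: g1_def g2_def\<close>)
  define p where "p = \<phi> x"
  have pS: "p \<in> S" using phiS x by (simp add: p_def)
  from hs pS obtain V h where V: "open V" "p \<in> V" "Cinf_on V h" "\<And>y. y \<in> V \<inter> S \<Longrightarrow> h y = \<alpha> y"
    unfolding homotopy_section_def Cinf_on_set_def S_def by metis
  have "Ck (Suc 0) V h" using V(3) by (simp add: Cinf_on_def)
  then have "h differentiable_on V" by simp
  define Hh where "Hh = frechet_derivative h (at p)"
  have Hd: "(h has_derivative Hh) (at p)"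
    using \<open>h differentiable_on V\<close> V(1,2) unfolding Hh_def
    by (simp add: differentiable_on_eq_differentiable_at frechet_derivative_works[symmetric])
  define W where "W = U \<inter> \<phi> -` V"
  have W: "open W" "x \<in> W"
    using continuous_open_preimage[OF differentiable_imp_continuous_on[OF dphi] U V(1)] x V(2)
    by (auto simp: W_def p_def)
  have da: "((\<lambda>y. \<alpha> (\<phi> y)) has_derivative (\<lambda>w. Hh (D x w))) (at x)"
  proof (rule has_derivative_transform_within_open[OF _ W])
    show "((\<lambda>y. h (\<phi> y)) has_derivative (\<lambda>w. Hh (D x w))) (at x)"
      using has_derivative_compose[OF Dd[OF x]] Hd by (simp add: p_def)
    show "\<And>y. y \<in> W \<Longrightarrow> h (\<phi> y) = \<alpha> (\<phi> y)" using V(4) phiS by (auto simp: W_def)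
  qed
  have hsp: "\<alpha> p ** p + p ** \<alpha> p = mat 1" "hom_deg N 1 (\<alpha> p)"
    using hs pS unfolding homotopy_section_def S_def by auto
  have hdp: "hom_deg N (-1) p" using pS by (simp add: S_def exact_diffs_def)
  have hD: "hom_deg N (-1) (D x w)" for w
    by (rule deriv_hom[OF U x _ Dd[OF x]]) (use phiS in \<open>auto simp: S_def exact_diffs_def\<close>)
  have antiD: "D x w ** p + p ** D x w = 0" for w
  proof -
    have dd: "((\<lambda>y. \<phi> y ** \<phi> y) has_derivative (\<lambda>h. \<phi> x ** D x h + D x h ** \<phi> x)) (at x)"
      using bounded_bilinear.FDERIV[OF bb_mm Dd[OF x] Dd[OF x]] .
    moreover have z: "\<And>y. y \<in> U \<Longrightarrow> \<phi> y ** \<phi> y = 0"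
      using phiS by (auto simp: S_def exact_diffs_def)
    ultimately have "\<phi> x ** D x w + D x w ** \<phi> x = 0"
      using deriv_zero[OF U x z dd, where h=w] by simp
    then show ?thesis by (simp add: p_def add.commute)
  qed
  have relA: "Hh (D x w) ** p + \<alpha> p ** D x w + D x w ** \<alpha> p + p ** Hh (D x w) = 0" for w
  proof -
    have dd: "((\<lambda>y. \<alpha> (\<phi> y) ** \<phi> y + \<phi> y ** \<alpha> (\<phi> y)) has_derivative
        (\<lambda>h. (\<alpha> (\<phi> x) ** D x h + Hh (D x h) ** \<phi> x) + (\<phi> x ** Hh (D x h) + D x h ** \<alpha> (\<phi> x)))) (at x)"
      by (intro has_derivative_add bounded_bilinear.FDERIV[OF bb_mm] da Dd[OF x])
    moreover have z: "\<And>y. y \<in> U \<Longrightarrow> \<alpha> (\<phi> y) ** \<phi> y + \<phi> y ** \<alpha> (\<phi> y) = mat 1"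
      using phiS hs by (auto simp: S_def homotopy_section_def)
    ultimately have "(\<alpha> (\<phi> x) ** D x w + Hh (D x w) ** \<phi> x) + (\<phi> x ** Hh (D x w) + D x w ** \<alpha> (\<phi> x)) = 0"
      using deriv_zero[OF U x z dd, where h=w] by simp
    then show ?thesis by (simp add: p_def algebra_simps)
  qed
  define A where "A = (\<lambda>w. - str N (\<alpha> (\<phi> x) ** G1 w + Hh (D x w) ** g1 x))"
  define B where "B = (\<lambda>w. - str N (\<alpha> (\<phi> x) ** G2 w + Hh (D x w) ** g2 x))"
  have Ad: "((\<lambda>y. kappa N \<alpha> (\<phi> y) (frechet_derivative \<phi> (at y) (1, 0))) has_derivative A) (at x)"
  proof -
    have "((\<lambda>y. - str N (\<alpha> (\<phi> y) ** g1 y)) has_derivative A) (at x)"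
      unfolding A_def
      by (intro has_derivative_minus bounded_linear.has_derivative[OF bl_str]
            bounded_bilinear.FDERIV[OF bb_mm] da G1d)
    then show ?thesis by (simp add: kappa_eq g1_def D_def)
  qed
  have Bd: "((\<lambda>y. kappa N \<alpha> (\<phi> y) (frechet_derivative \<phi> (at y) (0, 1))) has_derivative B) (at x)"
  proof -
    have "((\<lambda>y. - str N (\<alpha> (\<phi> y) ** g2 y)) has_derivative B) (at x)"
      unfolding B_def
      by (intro has_derivative_minus bounded_linear.has_derivative[OF bl_str]
            bounded_bilinear.FDERIV[OF bb_mm] da G2d)
    then show ?thesis by (simp add: kappa_eq g2_def D_def)
  qed
  have key: "str N (Hh (D x (1,0)) ** g2 x) = str N (Hh (D x (0,1)) ** g1 x)"
    unfolding g1_def g2_def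
    by (rule L2[OF hsp(1) hdp hsp(2) hD antiD antiD relA relA])
  have "B (1,0) = A (0,1)"
    using key sym by (simp add: A_def B_def str_add p_def)
  then show "\<exists>A B. ((\<lambda>y. kappa N \<alpha> (\<phi> y) (frechet_derivative \<phi> (at y) (1, 0))) has_derivative A) (at x) \<and>
             ((\<lambda>y. kappa N \<alpha> (\<phi> y) (frechet_derivative \<phi> (at y) (0, 1))) has_derivative B) (at x) \<and>
             B (1, 0) = A (0, 1)"
    using Ad Bd by blast
qed

theorem mainTheorem12:
  fixes N :: "'n::finite \<Rightarrow> int"
  assumes "exact_diffs N \<noteq> {}"
  shows "(\<forall>\<alpha> \<alpha>'. homotopy_section N \<alpha> \<and> homotopy_section N \<alpha>' \<longrightarrow>
            (\<forall>\<delta>\<in>exact_diffs N. \<forall>v\<in>tangent_space (exact_diffs N) \<delta>.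
               kappa N \<alpha> \<delta> v = kappa N \<alpha>' \<delta> v))
       \<and> (\<forall>\<alpha>. homotopy_section N \<alpha> \<longrightarrow> closed_1form (exact_diffs N) (kappa N \<alpha>))
       \<and> (\<forall>\<alpha> f. homotopy_section N \<alpha> \<and> form_section0 N f \<longrightarrow>
            (\<forall>\<delta>\<in>exact_diffs N. \<forall>v\<in>tangent_space (exact_diffs N) \<delta>.
               str_form N (lmul0 1 (\<alpha> \<delta>) (scomm10 0 1 (f \<delta>) \<delta>)) v = str_form N (f \<delta>) v))"
proof (intro conjI allI impI ballI)
  fix \<alpha> \<alpha>' \<delta> v
  assume h: "homotopy_section N \<alpha> \<and> homotopy_section N \<alpha>'" and d: "\<delta> \<in> exact_diffs N"
    and v: "v \<in> tangent_space (exact_diffs N) \<delta>"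
  show "kappa N \<alpha> \<delta> v = kappa N \<alpha>' \<delta> v"
    using h by (intro part1[OF _ _ d v]) simp_all
next
  fix \<alpha> :: "'n endo \<Rightarrow> 'n endo" assume "homotopy_section N \<alpha>"
  then show "closed_1form (exact_diffs N) (kappa N \<alpha>)" by (rule part2)
next
  fix \<alpha> f \<delta> v
  assume h: "homotopy_section N \<alpha> \<and> form_section0 N f" and d: "\<delta> \<in> exact_diffs N"
    and v: "v \<in> tangent_space (exact_diffs N) \<delta>"
  show "str_form N (lmul0 1 (\<alpha> \<delta>) (scomm10 0 1 (f \<delta>) \<delta>)) v = str_form N (f \<delta>) v"
    using h by (intro part3[OF _ d]) simp
qed


end
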